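(* Let $I,J$ be finite sets and $E\subseteq I\times J$, with $J_i=\{j:(i,j)\in E\}$ and $I_j=\{i:(i,j)\in E\}$, and let $\lambda_i>0$ for $i\in I$. Let $p(\rho)=\min\{2\rho,1\}$. Suppose that nonnegative numbers $(x_{ij})_{(i,j)\in E}$, $(y_{ij})_{(i,j)\in E}$ and $(\Delta_j)_{j\in J}$ satisfy the following conditions: (i) $x_i:=\sum_{j\in J_i}x_{ij}\le\lambda_i$ for every $i$; (ii) $\sum_{j\in J_i}y_{ij}=\lambda_i\,p(x_i/\lambda_i)$ for every $i$; (iii) $\lambda_i p(x_i/\lambda_i)-\lambda_i p\big((x_i-x_{ij})/\lambda_i\big)\le y_{ij}\le\min\{2x_{ij},\lambda_i\}$ for every $(i,j)\in E$; (iv) $\Delta_j\le 1-\ln 2$ for every $j$. Let $y_j=\sum_{i\in I_j}y_{ij}$ and $\Delta_{ij}=(2x_{ij}-\lambda_i)^+$; no relation between $\Delta_j$ and $\sum_i\Delta_{ij}$ is assumed. Then \[ \sum_{j\in J}(2-\Delta_j)\sum_{i\in I_j}\Big(\lambda_i p\Big(\tfrac{x_i}{\lambda_i}\Big)-\lambda_i p\Big(\tfrac{x_i-x_{ij}}{\lambda_i}\Big)-\Delta_{ij}\Big)+\sum_{j\in J}y_j(\Delta_j-1+\ln 2)\ \le\ (2+2\ln 2)\sum_{(i,j)\in E}(y_{ij}-x_{ij}). \]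
   Context: $z^+=\max\{z,0\}$. *)

theory Defs
  imports Complex_Main
begin

definition p :: "real \<Rightarrow> real" where
  "p \<rho> = min (2 * \<rho>) 1"

definition pos_part :: "real \<Rightarrow> real" where
  "pos_part z = max z 0"

end

theory Submission
  imports Defs
begin

lemma lp: "l > 0 \<Longrightarrow> l * p (a / l) = min (2*a) l"
  by (auto simp: p_def min_def field_simps)

lemma per_i:
  fixes K :: "'b set" and x :: "'b \<Rightarrow> real" and l X :: real
  assumes fin: "finite K" and l: "l > 0" and xnn: "\<And>j. j \<in> K \<Longrightarrow> x j \<ge> 0"
    and X: "X = (\<Sum>j\<in>K. x j)" and Xl: "X \<le> l"
  shows "(\<Sum>j\<in>K. l * p (X / l) - l * p ((X - x j) / l) - pos_part (2 * x j - l))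
         \<le> 2 * (l * p (X / l)) - 2 * X"
proof -
  have xle: "x j \<le> X" if "j \<in> K" for j
    unfolding X using fin that xnn by (intro member_le_sum) auto
  show ?thesis
  proof (cases "2 * X \<le> l")
    case True
    have "(\<Sum>j\<in>K. l * p (X / l) - l * p ((X - x j) / l) - pos_part (2 * x j - l))
        = (\<Sum>j\<in>K. 2 * x j)"
    proof (rule sum.cong)
      fix j assume j: "j \<in> K"
      show "l * p (X / l) - l * p ((X - x j) / l) - pos_part (2 * x j - l) = 2 * x j"
        using xle[OF j] xnn[OF j] True l by (simp add: lp pos_part_def)
    qed simp
    also have "\<dots> = 2 * X" by (simp add: X sum_distrib_left)
    finally show ?thesis using True l by (simp add: lp)
  next
    case False
    define c where "c = 2 * X - l"
    define g where "g j = l * p (X / l) - l * p ((X - x j) / l) - pos_part (2 * x j - l)" for j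
    have lpX: "l * p (X / l) = l" using False l by (simp add: lp)
    define S where "S = {j\<in>K. 2 * x j > c}"
    have SK: "S \<subseteq> K" by (auto simp: S_def)
    have finS: "finite S" using fin SK finite_subset by blast
    have gout: "g j \<le> 0" if "j \<in> K" "j \<notin> S" for j
      using that l xnn[of j] unfolding g_def S_def c_def lpX
      by (auto simp: lp pos_part_def)
    have gin1: "g j \<le> 2 * x j - c" if "j \<in> S" for j
      using that l xnn[of j] unfolding g_def c_def lpX S_def
      by (auto simp: lp pos_part_def)
    have gin2: "g j \<le> l - c" if "j \<in> K" for j
      using that l xnn[of j] xle[of j] Xl unfolding g_def c_def lpX
      by (simp add: lp pos_part_def min_def max_def)
    have "sum g K = sum g (K - S) + sum g S" using sum.subset_diff[OF SK fin] .
    also have "sum g (K - S) \<le> 0" using gout by (intro sum_nonpos) auto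
    finally have sK: "sum g K \<le> sum g S" by simp
    have cl: "c \<le> l" "c > 0" using Xl False by (auto simp: c_def)
    have "sum g S \<le> l - c"
    proof (cases "card S \<ge> 2")
      case True
      have a1: "sum g S \<le> (\<Sum>j\<in>S. 2 * x j - c)" using gin1 SK by (intro sum_mono) auto
      have a2: "(\<Sum>j\<in>S. 2 * x j - c) = 2 * (\<Sum>j\<in>S. x j) - real (card S) * c"
        by (simp add: sum_subtractf sum_distrib_left)
      have a3: "(\<Sum>j\<in>S. x j) \<le> X" unfolding X using fin SK xnn by (intro sum_mono2) auto
      have a4: "2 * c \<le> real (card S) * c" using True cl(2) by (intro mult_right_mono) auto
      show ?thesis using a1 a2 a3 a4 c_def by linarith
    next
      case False
      hence "card S = 0 \<or> card S = 1" by auto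
      thus ?thesis
      proof
        assume "card S = 0" hence "S = {}" using finS by simp
        thus ?thesis using cl by simp
      next
        assume "card S = 1" then obtain j0 where "S = {j0}" by (auto simp: card_Suc_eq)
        thus ?thesis using gin2 SK by auto
      qed
    qed
    with sK show ?thesis unfolding g_def lpX c_def by simp
  qed
qed

lemma sumE:
  fixes F :: "'a \<Rightarrow> 'b \<Rightarrow> real"
  assumes "finite I" "finite J" "E \<subseteq> I \<times> J"
  shows "(\<Sum>j\<in>J. \<Sum>i\<in>{i. (i,j)\<in>E}. F i j) = (\<Sum>(i,j)\<in>E. F i j)"
    and "(\<Sum>i\<in>I. \<Sum>j\<in>{j. (i,j)\<in>E}. F i j) = (\<Sum>(i,j)\<in>E. F i j)"
proof -
  have f1: "finite {i. (i,j)\<in>E}" for j by (rule finite_subset[OF _ assms(1)]) (use assms(3) in auto)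
  have f2: "finite {j. (i,j)\<in>E}" for i by (rule finite_subset[OF _ assms(2)]) (use assms(3) in auto)
  have e1: "E = prod.swap ` (SIGMA j:J. {i. (i,j)\<in>E})" using assms(3) by force
  have e2: "E = (SIGMA i:I. {j. (i,j)\<in>E})" using assms(3) by force
  have "(\<Sum>j\<in>J. \<Sum>i\<in>{i. (i,j)\<in>E}. F i j) = (\<Sum>(j,i)\<in>(SIGMA j:J. {i. (i,j)\<in>E}). F i j)"
    using assms(2) f1 by (subst sum.Sigma) auto
  also have "\<dots> = (\<Sum>(i,j)\<in>E. F i j)"
    by (subst e1, subst sum.reindex) (auto simp: inj_on_def case_prod_beta)
  finally show "(\<Sum>j\<in>J. \<Sum>i\<in>{i. (i,j)\<in>E}. F i j) = (\<Sum>(i,j)\<in>E. F i j)" .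
  show "(\<Sum>i\<in>I. \<Sum>j\<in>{j. (i,j)\<in>E}. F i j) = (\<Sum>(i,j)\<in>E. F i j)"
    using assms(1) f2 by (subst e2, subst sum.Sigma) auto
qed

theorem mainTheorem5:
  fixes I :: "'a set" and J :: "'b set" and E :: "('a \<times> 'b) set"
    and lam :: "'a \<Rightarrow> real" and x y :: "'a \<Rightarrow> 'b \<Rightarrow> real"
    and D :: "'b \<Rightarrow> real"
  assumes finI: "finite I" and finJ: "finite J" and EIJ: "E \<subseteq> I \<times> J"
    and lam_pos: "\<And>i. i \<in> I \<Longrightarrow> lam i > 0"
    and x_nn: "\<And>i j. (i, j) \<in> E \<Longrightarrow> x i j \<ge> 0"
    and y_nn: "\<And>i j. (i, j) \<in> E \<Longrightarrow> y i j \<ge> 0"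
    and D_nn: "\<And>j. j \<in> J \<Longrightarrow> D j \<ge> 0"
    and c1: "\<And>i. i \<in> I \<Longrightarrow> (\<Sum>j\<in>{j. (i, j) \<in> E}. x i j) \<le> lam i"
    and c2: "\<And>i. i \<in> I \<Longrightarrow> (\<Sum>j\<in>{j. (i, j) \<in> E}. y i j)
               = lam i * p ((\<Sum>j\<in>{j. (i, j) \<in> E}. x i j) / lam i)"
    and c3lo: "\<And>i j. (i, j) \<in> E \<Longrightarrow>
               lam i * p ((\<Sum>j'\<in>{j'. (i, j') \<in> E}. x i j') / lam i)
               - lam i * p (((\<Sum>j'\<in>{j'. (i, j') \<in> E}. x i j') - x i j) / lam i) \<le> y i j"
    and c3hi: "\<And>i j. (i, j) \<in> E \<Longrightarrow> y i j \<le> min (2 * x i j) (lam i)"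
    and c4: "\<And>j. j \<in> J \<Longrightarrow> D j \<le> 1 - ln 2"
  shows "(\<Sum>j\<in>J. (2 - D j) * (\<Sum>i\<in>{i. (i, j) \<in> E}.
            lam i * p ((\<Sum>j'\<in>{j'. (i, j') \<in> E}. x i j') / lam i)
            - lam i * p (((\<Sum>j'\<in>{j'. (i, j') \<in> E}. x i j') - x i j) / lam i)
            - pos_part (2 * x i j - lam i)))
         + (\<Sum>j\<in>J. (\<Sum>i\<in>{i. (i, j) \<in> E}. y i j) * (D j - 1 + ln 2))
         \<le> (2 + 2 * ln 2) * (\<Sum>(i, j)\<in>E. y i j - x i j)"
proof -
  define X where "X i = (\<Sum>j'\<in>{j'. (i, j') \<in> E}. x i j')" for i
  define g where "g i j = lam i * p (X i / lam i) - lam i * p ((X i - x i j) / lam i)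
            - pos_part (2 * x i j - lam i)" for i j
  define T where "T i j = (2 - D j) * g i j + y i j * (D j - 1 + ln 2)" for i j
  have fJi: "finite {j. (i,j)\<in>E}" for i by (rule finite_subset[OF _ finJ]) (use EIJ in auto)
  have "(\<Sum>j\<in>J. (2 - D j) * (\<Sum>i\<in>{i. (i, j) \<in> E}. g i j))
         + (\<Sum>j\<in>J. (\<Sum>i\<in>{i. (i, j) \<in> E}. y i j) * (D j - 1 + ln 2))
       = (\<Sum>j\<in>J. \<Sum>i\<in>{i. (i, j) \<in> E}. T i j)"
    by (simp add: T_def sum.distrib sum_distrib_left sum_distrib_right mult.commute)
  also have "\<dots> = (\<Sum>i\<in>I. \<Sum>j\<in>{j. (i, j) \<in> E}. T i j)"
    using sumE[OF finI finJ EIJ, of T] by simp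
  also have "\<dots> \<le> (\<Sum>i\<in>I. \<Sum>j\<in>{j. (i, j) \<in> E}. (2 + 2 * ln 2) * (y i j - x i j))"
  proof (rule sum_mono)
    fix i assume i: "i \<in> I"
    have li: "lam i > 0" using lam_pos[OF i] .
    have tm: "T i j \<le> (1 + ln 2) * (g i j - 2 * y i j + 2 * x i j) + (2 + 2 * ln 2) * (y i j - x i j)"
      if j: "(i,j) \<in> E" for j
    proof -
      have gy: "g i j \<le> y i j" using c3lo[OF j] unfolding g_def X_def pos_part_def by simp
      have jJ: "j \<in> J" using j EIJ by auto
      have "0 \<le> (1 - ln 2 - D j) * (y i j - g i j)"
        using gy c4[OF jJ] by (intro mult_nonneg_nonneg) auto
      thus ?thesis unfolding T_def by (simp add: algebra_simps)
    qed
    have s1: "(\<Sum>j\<in>{j. (i, j) \<in> E}. g i j) \<le> 2 * (lam i * p (X i / lam i)) - 2 * X i"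
      unfolding g_def
      by (rule per_i[OF fJi li]) (use c1[OF i] x_nn in \<open>auto simp: X_def\<close>)
    have s2: "(\<Sum>j\<in>{j. (i, j) \<in> E}. y i j) = lam i * p (X i / lam i)"
      using c2[OF i] by (simp add: X_def)
    have "(\<Sum>j\<in>{j. (i, j) \<in> E}. T i j) \<le> (\<Sum>j\<in>{j. (i, j) \<in> E}.
          (1 + ln 2) * (g i j - 2 * y i j + 2 * x i j) + (2 + 2 * ln 2) * (y i j - x i j))"
      using tm by (intro sum_mono) auto
    also have "\<dots> = (1 + ln 2) * ((\<Sum>j\<in>{j. (i, j) \<in> E}. g i j) - 2 * (\<Sum>j\<in>{j. (i, j) \<in> E}. y i j)
          + 2 * X i) + (\<Sum>j\<in>{j. (i, j) \<in> E}. (2 + 2 * ln 2) * (y i j - x i j))"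
      by (simp add: sum.distrib sum_subtractf sum_distrib_left[symmetric] X_def)
    also have "\<dots> \<le> (\<Sum>j\<in>{j. (i, j) \<in> E}. (2 + 2 * ln 2) * (y i j - x i j))"
    proof -
      have "(\<Sum>j\<in>{j. (i, j) \<in> E}. g i j) - 2 * (\<Sum>j\<in>{j. (i, j) \<in> E}. y i j) + 2 * X i \<le> 0"
        using s1 s2 by linarith
      moreover have "1 + ln (2::real) \<ge> 0" by simp
      ultimately show ?thesis by (simp add: mult_nonneg_nonpos)
    qed
    finally show "(\<Sum>j\<in>{j. (i, j) \<in> E}. T i j) \<le> (\<Sum>j\<in>{j. (i, j) \<in> E}. (2 + 2 * ln 2) * (y i j - x i j))" .
  qed
  also have "\<dots> = (2 + 2 * ln 2) * (\<Sum>(i, j)\<in>E. y i j - x i j)"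
    using sumE(2)[OF finI finJ EIJ, of "\<lambda>i j. y i j - x i j"]
    by (simp add: sum_distrib_left[symmetric])
  finally show ?thesis unfolding g_def X_def .
qed

end
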